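(* There is an absolute constant $C$ such that for every $0<\gamma<\frac1{15}$ there is $Q_0(\gamma)$ with the following property: for all $\zeta_1,\zeta_2\in[-1,1]$ and every integer $Q\ge Q_0(\gamma)$ there exist an integer $1\le q\le Q$ and $a=(a_1,a_2)\in\mathbb{Z}^2$ with $$\max_{j=1,2}\Big|\zeta_j-\frac{a_j}{q}\Big|\le\frac{C}{q^{1/2}Q^{\frac12+\gamma}}.$$ *)

theory Defs
  imports Complex_Main
begin

end

theory Submission
  imports Defs "HOL-Analysis.Kronecker_Approximation_Theorem"
begin

lemma sweep:
  fixes t1 t2 :: real and M :: nat
  assumes M: "M > 0" and le: "\<bar>t2\<bar> \<le> \<bar>t1\<bar>" and pos: "0 < \<bar>t1\<bar>" and le1: "\<bar>t1\<bar> \<le> 1"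
  obtains k b1 b2 :: int where "k \<ge> 1" "real_of_int k \<le> M / \<bar>t1\<bar> + 1/2"
    "real_of_int k \<ge> 1 / (2 * \<bar>t1\<bar>)"
    "\<bar>k * t1 - b1\<bar> \<le> \<bar>t1\<bar> / 2" "\<bar>k * t2 - b2\<bar> \<le> \<bar>t1\<bar> / 2 + 1 / M"
proof -
  define t where "t = \<bar>t1\<bar>"
  define r where "r = t2 / t1"
  have r1: "\<bar>r\<bar> \<le> 1" using le pos by (simp add: r_def abs_divide divide_le_eq_1)
  obtain m p where m: "0 < m" "m \<le> int (M ^ 1)" "\<And>i::nat. i < 1 \<Longrightarrow> \<bar>of_int m * r - of_int (p i)\<bar> < 1 / M"
    by (rule Dirichlet_approx_simult[OF M, where \<theta>="\<lambda>_. r" and n=1]) auto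
  define s where "s = p 0"
  have ms: "\<bar>m * r - s\<bar> < 1 / M" using m(3)[of 0] by (simp add: s_def)
  have mM: "real_of_int m \<le> M" using m(2) by simp
  define k where "k = \<lfloor>m / t + 1/2\<rfloor>"
  have tpos: "t > 0" using pos t_def by simp
  have k1: "k \<le> m / t + 1/2" "k > m / t - 1/2" unfolding k_def by linarith+
  have "m / t \<ge> 1 / t" using m(1) tpos by (simp add: divide_right_mono)
  moreover have "1 / t \<ge> 1" using tpos le1 t_def by simp
  moreover have "1 / (2*t) = (1/t)/2" by simp
  ultimately have kge: "k \<ge> 1 / (2*t)" using k1 by linarith
  have "1 / (2*t) \<ge> 1/2" using tpos le1 t_def by (simp add: field_simps)
  then have "k \<ge> 1" using kge k1 by linarith
  have kt: "\<bar>k * t - m\<bar> \<le> t / 2"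
  proof -
    have "k * t \<le> (m / t + 1/2) * t" using k1 tpos by (intro mult_right_mono) auto
    moreover have "k * t \<ge> (m / t - 1/2) * t" using k1 tpos by (intro mult_right_mono) auto
    moreover have "(m / t + 1/2) * t = m + t/2" "(m / t - 1/2) * t = m - t/2" using tpos by (simp_all add: field_simps)
    ultimately show ?thesis unfolding abs_le_iff by linarith
  qed
  define \<sigma> :: int where "\<sigma> = (if t1 > 0 then 1 else -1)"
  have kt1: "\<bar>k * t1 - \<sigma> * m\<bar> \<le> t / 2"
  proof (cases "t1 > 0")
    case True then show ?thesis using kt unfolding \<sigma>_def t_def by simp
  next
    case False
    then have "t = - t1" "\<sigma> = -1" using pos unfolding t_def \<sigma>_def by auto
    then have "k * t1 - \<sigma> * m = - (k * t - m)" by simp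
    then show ?thesis using kt by (simp only: abs_minus_cancel)
  qed
  have "\<bar>k * t2 - \<sigma> * s\<bar> \<le> \<bar>r\<bar> * \<bar>k * t1 - \<sigma> * m\<bar> + \<bar>m * r - s\<bar>"
  proof -
    have "k * t2 - \<sigma> * s = r * (k * t1 - \<sigma> * m) + \<sigma> * (m * r - s)"
      using pos by (simp add: r_def field_simps)
    moreover have "\<bar>\<sigma> * (m * r - s)\<bar> = \<bar>m * r - s\<bar>" by (simp add: \<sigma>_def abs_mult)
    ultimately show ?thesis by (metis abs_mult abs_triangle_ineq)
  qed
  also have "\<dots> \<le> 1 * (t/2) + 1 / M"
    using ms r1 kt1 by (intro add_mono mult_mono) auto
  finally have kt2: "\<bar>k * t2 - \<sigma> * s\<bar> \<le> t / 2 + 1 / M" by simp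
  have "real_of_int k \<le> M / t + 1/2"
    using k1 mM tpos by (smt (verit) divide_right_mono)
  show ?thesis
    apply (rule that[of k "\<sigma> * m" "\<sigma> * s"])
    using \<open>k \<ge> 1\<close> \<open>real_of_int k \<le> M / t + 1/2\<close> kge kt1 kt2 unfolding t_def by auto
qed


lemma caseB:
  fixes Q q1 p1 p2 :: int and x y s P w :: real
  assumes s2: "s \<ge> 2" and w: "w > 0" "w * w = s" and sQ: "s * s = Q"
    and P1: "P \<ge> 1" and P3: "P ^ 3 \<le> w"
    and q1: "1 \<le> q1" "q1 \<le> Q"
    and le: "\<bar>q1 * y - p2\<bar> \<le> \<bar>q1 * x - p1\<bar>"
    and big: "4 * sqrt q1 / (s * P) < \<bar>q1 * x - p1\<bar>"
    and small: "\<bar>q1 * x - p1\<bar> < 2 / s"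
  shows "\<exists>(q::int) (a1::int) (a2::int). 1 \<le> q \<and> q \<le> Q \<and> \<bar>q * x - a1\<bar> \<le> 4 * sqrt q / (s * P)
          \<and> \<bar>q * y - a2\<bar> \<le> 4 * sqrt q / (s * P)"
proof -
  define t1 where "t1 = q1 * x - p1"
  define t2 where "t2 = q1 * y - p2"
  define t where "t = \<bar>t1\<bar>"
  have spos: "s > 0" using s2 by simp
  have Ppos: "P > 0" using P1 by simp
  have "P \<le> P ^ 3" using P1 by (simp add: power3_eq_cube) (metis mult_le_cancel_left1 P1 less_le_trans zero_less_one mult_left_mono order_trans less_imp_le mult_1_right)
  then have Pw: "P \<le> w" using P3 by simp
  have w1: "w \<ge> 1" using P1 Pw by simp
  have wP1: "w * P \<ge> 1" using mult_mono[of 1 w 1 P] w1 P1 by simp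
  have wPs: "w * P \<le> s" using w Pw by (metis mult_left_mono less_imp_le)
  define M where "M = nat \<lceil>w * P\<rceil>"
  have MwP: "real M \<ge> w * P" unfolding M_def by linarith
  have MwP2: "real M \<le> 2 * (w * P)" unfolding M_def using wP1 by linarith
  have M0: "M > 0" using MwP wP1 by simp
  have tpos: "0 < t" using big spos Ppos unfolding t_def t1_def
    by (smt (verit) divide_nonneg_pos real_sqrt_ge_zero of_int_0_le_iff q1(1) mult_pos_pos)
  have t1le: "t < 2 / s" using small by (simp add: t_def t1_def)
  have "2 / s \<le> 1" using s2 by simp
  then have tle1: "t \<le> 1" using t1le by simp
  have le': "\<bar>t2\<bar> \<le> \<bar>t1\<bar>" using le t1_def t2_def by simp
  have tp': "0 < \<bar>t1\<bar>" "\<bar>t1\<bar> \<le> 1" using tpos tle1 t_def by auto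
  obtain k b1 b2 :: int where k: "k \<ge> 1" "real_of_int k \<le> M / t + 1/2" "real_of_int k \<ge> 1 / (2 * t)"
    "\<bar>k * t1 - b1\<bar> \<le> t / 2" "\<bar>k * t2 - b2\<bar> \<le> t / 2 + 1 / M"
    using sweep[OF M0 le' tp'] unfolding t_def by blast
  define q where "q = k * q1"
  define B where "B = 4 * sqrt q / (s * P)"
  have qx: "q * x - (k * p1 + b1) = k * t1 - b1" unfolding q_def t1_def by (simp add: algebra_simps)
  have qy: "q * y - (k * p2 + b2) = k * t2 - b2" unfolding q_def t2_def by (simp add: algebra_simps)
  have q1pos: "real_of_int q1 \<ge> 1" using q1 by simp
  have sq1a: "sqrt q1 < t * s * P / 4" using big spos Ppos unfolding t_def t1_def by (simp add: field_simps)
  have "t * s * P / 4 < (2 / s) * s * P / 4" using t1le spos Ppos by (intro divide_strict_right_mono mult_strict_right_mono) auto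
  also have "\<dots> = P / 2" using spos by simp
  finally have "t * s * P / 4 < P / 2" .
  then have sq1P: "sqrt q1 < P / 2" using sq1a by linarith
  have sq1t: "sqrt q1 / t < s * P / 4" using sq1a tpos by (simp add: field_simps)
  have "q1 / t = sqrt q1 * (sqrt q1 / t)" proof -
    have "sqrt q1 * sqrt q1 = q1" using q1pos by simp
    then show ?thesis by (metis times_divide_eq_right)
  qed
  also have "\<dots> \<le> (P / 2) * (s * P / 4)" using sq1P sq1t Ppos tpos q1pos by (intro mult_mono) auto
  finally have q1t: "q1 / t \<le> s * P^2 / 8" by (simp add: power2_eq_square mult_ac)
  have "real_of_int q \<le> (M / t + 1/2) * q1" unfolding q_def using k(2) q1pos by (simp add: mult_right_mono)
  also have "\<dots> = M * (q1 / t) + q1 / 2" by (simp add: field_simps)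
  also have "\<dots> \<le> (2 * (w * P)) * (s * P^2 / 8) + q1 / 2"
    using MwP2 q1t tpos q1pos by (intro add_mono mult_mono) auto
  also have "\<dots> = w * s * P^3 / 4 + q1 / 2" by (simp add: power2_eq_square power3_eq_cube)
  also have "\<dots> \<le> w * s * w / 4 + q1 / 2" using P3 w spos by (intro add_mono divide_right_mono mult_left_mono) auto
  also have "\<dots> = Q / 4 + q1 / 2" using w sQ by (simp add: algebra_simps)
  also have "\<dots> \<le> Q" using q1 by simp
  finally have qQ: "q \<le> Q" by linarith
  have "1 / (2 * t) > s / 4" using t1le tpos spos by (simp add: field_simps)
  moreover have "k \<le> q" unfolding q_def using mult_left_mono[of 1 q1 k] k(1) q1(1) by simp
  ultimately have qs: "real_of_int q \<ge> s / 4" using k(3) by linarith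
  have "sqrt (s / 4) = w / 2" using w by (metis real_sqrt_abs2 abs_of_pos real_sqrt_divide real_sqrt_four times_divide_eq_left mult.commute)
  then have sqq: "sqrt q \<ge> w / 2" using qs by (metis real_sqrt_le_mono)
  have "2 / (w * P) = 4 * (w / 2) / (s * P)" using w Ppos by (simp add: field_simps w(2)[symmetric])
  also have "\<dots> \<le> B" unfolding B_def using sqq spos Ppos by (intro divide_right_mono) auto
  finally have B2: "2 / (w * P) \<le> B" .
  have inv1: "t / 2 \<le> 1 / (w * P)"
  proof -
    have "t / 2 < 1 / s" using t1le by simp
    also have "1 / s \<le> 1 / (w * P)" using wPs wP1 by (simp add: frac_le)
    finally show ?thesis by simp
  qed
  have inv2: "1 / real M \<le> 1 / (w * P)" using MwP wP1 by (simp add: frac_le)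
  have "q \<ge> 1" using \<open>k \<le> q\<close> k(1) by simp
  have h1: "1 / (w * P) \<le> 2 / (w * P)" using wP1 by (simp add: divide_right_mono)
  have e1: "\<bar>k * t1 - b1\<bar> \<le> B" using order_trans[OF order_trans[OF k(4) inv1] order_trans[OF h1 B2]] .
  have "\<bar>k * t2 - b2\<bar> \<le> 1 / (w * P) + 1 / (w * P)" using order_trans[OF k(5) add_mono[OF inv1 inv2]] .
  also have "\<dots> = 2 / (w * P)" by simp
  finally have e2: "\<bar>k * t2 - b2\<bar> \<le> B" using B2 by simp
  have "\<bar>q * x - (k * p1 + b1)\<bar> \<le> B \<and> \<bar>q * y - (k * p2 + b2)\<bar> \<le> B"
    using e1 e2 qx qy by (simp only:)
  then show ?thesis using qQ \<open>q \<ge> 1\<close> unfolding B_def by blast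
qed


lemma main_aux:
  fixes \<gamma> x y :: real and Q :: int
  assumes g: "0 < \<gamma>" "\<gamma> < 1/15" and Q4: "Q \<ge> 4"
  shows "\<exists>(q::int) (a1::int) (a2::int). 1 \<le> q \<and> q \<le> Q \<and>
     \<bar>q * x - a1\<bar> \<le> 4 * sqrt q / (sqrt Q * Q powr \<gamma>) \<and>
     \<bar>q * y - a2\<bar> \<le> 4 * sqrt q / (sqrt Q * Q powr \<gamma>)"
proof -
  define s where "s = sqrt Q"
  define w where "w = sqrt s"
  define P where "P = Q powr \<gamma>"
  have RQ: "real_of_int Q \<ge> 4" using Q4 by simp
  have s2: "s \<ge> 2" unfolding s_def using real_sqrt_le_mono[OF RQ] by simp
  have sQ: "s * s = Q" unfolding s_def using RQ by simp
  have wpos: "w > 0" and ww: "w * w = s" unfolding w_def using s2 by auto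
  have P1: "P \<ge> 1" unfolding P_def using RQ g by (intro ge_one_powr_ge_zero) auto
  have P3: "P ^ 3 \<le> w"
  proof -
    have "P ^ 12 = Q powr (\<gamma> * 12)" unfolding P_def using RQ
      by (simp add: powr_powr[symmetric] powr_realpow)
    also have "\<dots> \<le> Q powr 1" using RQ g by (intro powr_mono) auto
    also have "\<dots> = w ^ 4" using RQ sQ ww by (simp add: power4_eq_xxxx mult_ac)
    finally have "(P ^ 3) ^ 4 \<le> w ^ 4" by (simp add: power_mult[symmetric])
    then show ?thesis using power_le_imp_le_base[of "P^3" 3 w] wpos by simp
  qed
  have Ppos: "P > 0" using P1 by simp
  define N where "N = nat \<lfloor>s\<rfloor>"
  have RN: "real N \<le> s" "real N > s - 1" unfolding N_def using s2 by linarith+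
  have N0: "N > 0" using RN s2 by simp
  have "real (N^2) \<le> s * s" using RN s2 by (simp add: power2_eq_square mult_mono)
  then have NQ: "int (N^2) \<le> Q" using sQ by (metis of_int_le_iff of_int_of_nat_eq of_nat_numeral of_int_le_iff)
  have invN: "1 / real N < 2 / s"
  proof -
    have "s / 2 < real N" using RN s2 by linarith
    then show ?thesis using s2 N0 by (simp add: field_simps)
  qed
  obtain q1 p where q1: "0 < q1" "q1 \<le> int (N ^ 2)"
    "\<And>i::nat. i < 2 \<Longrightarrow> \<bar>of_int q1 * (if i = 0 then x else y) - of_int (p i)\<bar> < 1 / N"
    by (rule Dirichlet_approx_simult[OF N0, where \<theta>="\<lambda>i. if i = 0 then x else y" and n=2]) auto
  have t1: "\<bar>q1 * x - p 0\<bar> < 2 / s" using q1(3)[of 0] invN by simp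
  have t2: "\<bar>q1 * y - p 1\<bar> < 2 / s" using q1(3)[of 1] invN by simp
  have q1Q: "1 \<le> q1" "q1 \<le> Q" using q1 NQ by auto
  have sP: "sqrt Q * Q powr \<gamma> = s * P" unfolding s_def P_def by simp
  define B1 where "B1 = 4 * sqrt q1 / (s * P)"
  have "\<exists>(q::int) (a1::int) (a2::int). 1 \<le> q \<and> q \<le> Q \<and> \<bar>q * x - a1\<bar> \<le> 4 * sqrt q / (s * P)
          \<and> \<bar>q * y - a2\<bar> \<le> 4 * sqrt q / (s * P)"
  proof (cases "\<bar>q1 * x - p 0\<bar> \<le> B1 \<and> \<bar>q1 * y - p 1\<bar> \<le> B1")
    case True
    then show ?thesis using q1Q unfolding B1_def by blast
  next
    case False
    show ?thesis
    proof (cases "\<bar>q1 * y - p 1\<bar> \<le> \<bar>q1 * x - p 0\<bar>")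
      case True
      then have "B1 < \<bar>q1 * x - p 0\<bar>" using False by linarith
      from caseB[OF s2 wpos ww sQ P1 P3 q1Q True this[unfolded B1_def] t1] show ?thesis .
    next
      case F2: False
      then have le: "\<bar>q1 * x - p 0\<bar> \<le> \<bar>q1 * y - p 1\<bar>" by simp
      then have "B1 < \<bar>q1 * y - p 1\<bar>" using False by linarith
      from caseB[OF s2 wpos ww sQ P1 P3 q1Q le this[unfolded B1_def] t2] show ?thesis by blast
    qed
  qed
  then show ?thesis using sP by simp
qed

theorem lemma2p5:
  shows "\<exists>C::real. \<forall>\<gamma>::real. 0 < \<gamma> \<and> \<gamma> < 1/15 \<longrightarrow>
    (\<exists>Q0::int. \<forall>\<zeta>1 \<zeta>2 :: real. \<forall>Q::int.
       \<zeta>1 \<in> {-1..1} \<and> \<zeta>2 \<in> {-1..1} \<and> Q \<ge> Q0 \<longrightarrow>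
       (\<exists>q::int. \<exists>a1 a2 :: int. 1 \<le> q \<and> q \<le> Q \<and>
          max \<bar>\<zeta>1 - of_int a1 / of_int q\<bar> \<bar>\<zeta>2 - of_int a2 / of_int q\<bar>
            \<le> C / (real_of_int q powr (1/2) * real_of_int Q powr (1/2 + \<gamma>))))"
proof (rule exI[of _ "4::real"], intro allI impI, elim conjE)
  fix \<gamma> :: real assume g: "0 < \<gamma>" "\<gamma> < 1/15"
  show "\<exists>Q0::int. \<forall>\<zeta>1 \<zeta>2 :: real. \<forall>Q::int.
       \<zeta>1 \<in> {-1..1} \<and> \<zeta>2 \<in> {-1..1} \<and> Q \<ge> Q0 \<longrightarrow>
       (\<exists>q::int. \<exists>a1 a2 :: int. 1 \<le> q \<and> q \<le> Q \<and>
          max \<bar>\<zeta>1 - of_int a1 / of_int q\<bar> \<bar>\<zeta>2 - of_int a2 / of_int q\<bar>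
            \<le> 4 / (real_of_int q powr (1/2) * real_of_int Q powr (1/2 + \<gamma>)))"
  proof (rule exI[of _ "4::int"], intro allI impI, elim conjE)
    fix x y :: real and Q :: int assume "x \<in> {-1..1}" "y \<in> {-1..1}" and Q4: "4 \<le> Q"
    obtain q a1 a2 :: int where h: "1 \<le> q" "q \<le> Q" 
      "\<bar>q * x - a1\<bar> \<le> 4 * sqrt q / (sqrt Q * Q powr \<gamma>)"
      "\<bar>q * y - a2\<bar> \<le> 4 * sqrt q / (sqrt Q * Q powr \<gamma>)"
      using main_aux[OF g Q4, of x y] by blast
    have RQ: "real_of_int Q > 0" using Q4 by simp
    have Rq: "real_of_int q \<ge> 1" using h by simp
    have E: "4 * sqrt q / (sqrt Q * Q powr \<gamma>) / q
        = 4 / (real_of_int q powr (1/2) * real_of_int Q powr (1/2 + \<gamma>))"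
    proof -
      have "real_of_int Q powr (1/2 + \<gamma>) = sqrt Q * Q powr \<gamma>"
        using RQ by (simp add: powr_add powr_half_sqrt)
      moreover have "real_of_int q powr (1/2) = sqrt q" using Rq by (simp add: powr_half_sqrt)
      moreover have "sqrt q * sqrt q = q" using Rq by simp
      ultimately show ?thesis using Rq RQ
        by (simp add: field_simps)
    qed
    have D: "\<bar>z - a / q\<bar> = \<bar>q * z - a\<bar> / q" for z :: real and a :: int
    proof -
      have "z - a / q = (q * z - a) / q" using Rq by (simp add: field_simps)
      then show ?thesis using Rq by simp
    qed
    have "\<bar>x - a1 / q\<bar> \<le> 4 / (real_of_int q powr (1/2) * real_of_int Q powr (1/2 + \<gamma>))"
    proof -
      have "\<bar>x - a1 / q\<bar> = \<bar>q * x - a1\<bar> / q" by (rule D)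
      also have "\<dots> \<le> 4 * sqrt q / (sqrt Q * Q powr \<gamma>) / q" using h(3) Rq by (intro divide_right_mono) auto
      also have "\<dots> = 4 / (real_of_int q powr (1/2) * real_of_int Q powr (1/2 + \<gamma>))" by (rule E)
      finally show ?thesis .
    qed
    moreover have "\<bar>y - a2 / q\<bar> \<le> 4 / (real_of_int q powr (1/2) * real_of_int Q powr (1/2 + \<gamma>))"
    proof -
      have "\<bar>y - a2 / q\<bar> = \<bar>q * y - a2\<bar> / q" by (rule D)
      also have "\<dots> \<le> 4 * sqrt q / (sqrt Q * Q powr \<gamma>) / q" using h(4) Rq by (intro divide_right_mono) auto
      also have "\<dots> = 4 / (real_of_int q powr (1/2) * real_of_int Q powr (1/2 + \<gamma>))" by (rule E)
      finally show ?thesis .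
    qed
    ultimately show "\<exists>q::int. \<exists>a1 a2 :: int. 1 \<le> q \<and> q \<le> Q \<and>
          max \<bar>x - of_int a1 / of_int q\<bar> \<bar>y - of_int a2 / of_int q\<bar>
            \<le> 4 / (real_of_int q powr (1/2) * real_of_int Q powr (1/2 + \<gamma>))"
      using h(1,2) by auto
  qed
qed

end
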